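(* Let $F$ be a finite field of characteristic $3$. Let $k\ge 0$ be an integer, $m=3k+1$, and $t$ an integer with $t^3\equiv 1\pmod m$ and $\gcd(m,t-1)=1$. Let $G=T_{3m}=\langle x,y\mid x^m=y^3=1,\ y^{-1}xy=x^t\rangle$ (of order $3m$) and let $FG$ be its group algebra over $F$. Let $s\in FG$ be the sum of all elements of $G$ whose order is a power of $3$ (including the identity). Then $$\{\alpha\in FG \mid \alpha s=s\alpha=0\}=\{a^-\hat{x}y^{-1}+a\hat{x}+a^+\hat{x}y \mid a^-,a,a^+\in F,\ a^-+a+a^+=0\}.$$
   Context: $\hat{x}=\sum_{i=0}^{m-1}x^i\in FG$, and for $g\in G$, $\hat{x}g=\sum_{i=0}^{m-1}x^ig$. *)

theory Defs
  imports "HOL-Algebra.Multiplicative_Group" "HOL-Number_Theory.Cong"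
begin

text \<open>The group T_{3m} = < x, y | x^m = y^3 = 1, y^-1 x y = x^t >, realised concretely:
  the pair (i, j) with i < m, j < 3 stands for x^i y^j.  From y^-1 x y = x^t and t^3 = 1
  one gets y^j x^k = x^(k t^(2j)) y^j, whence the multiplication below.\<close>

definition Tgrp :: "nat \<Rightarrow> int \<Rightarrow> (nat \<times> nat) monoid" where
  "Tgrp m t = \<lparr> carrier = {(i, j). i < m \<and> j < 3},
     monoid.mult = (\<lambda>(i, j) (k, l). (nat ((int i + int k * t ^ (2 * j)) mod int m), (j + l) mod 3)),
     monoid.one = (0, 0) \<rparr>"

definition xgen :: "nat \<Rightarrow> nat \<times> nat" where
  "xgen m = (1 mod m, 0)"

definition ygen :: "nat \<times> nat" where
  "ygen = (0, 1)"

definition in_FG :: "nat \<Rightarrow> int \<Rightarrow> (nat \<times> nat \<Rightarrow> 'a::field) \<Rightarrow> bool" where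
  "in_FG m t \<alpha> \<longleftrightarrow> (\<forall>g. g \<notin> carrier (Tgrp m t) \<longrightarrow> \<alpha> g = 0)"

definition ga_mult :: "nat \<Rightarrow> int \<Rightarrow> (nat \<times> nat \<Rightarrow> 'a::field) \<Rightarrow> (nat \<times> nat \<Rightarrow> 'a) \<Rightarrow> (nat \<times> nat \<Rightarrow> 'a)" where
  "ga_mult m t \<alpha> \<beta> = (\<lambda>g. \<Sum>h\<in>carrier (Tgrp m t). \<Sum>k\<in>carrier (Tgrp m t).
       if h \<otimes>\<^bsub>Tgrp m t\<^esub> k = g then \<alpha> h * \<beta> k else 0)"

definition ga_basis :: "nat \<times> nat \<Rightarrow> (nat \<times> nat \<Rightarrow> 'a::field)" where
  "ga_basis g = (\<lambda>h. if h = g then 1 else 0)"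

definition ga_add :: "(nat \<times> nat \<Rightarrow> 'a::field) \<Rightarrow> (nat \<times> nat \<Rightarrow> 'a) \<Rightarrow> (nat \<times> nat \<Rightarrow> 'a)" where
  "ga_add \<alpha> \<beta> = (\<lambda>g. \<alpha> g + \<beta> g)"

definition ga_smult :: "'a::field \<Rightarrow> (nat \<times> nat \<Rightarrow> 'a) \<Rightarrow> (nat \<times> nat \<Rightarrow> 'a)" where
  "ga_smult a \<alpha> = (\<lambda>g. a * \<alpha> g)"

definition xhat :: "nat \<Rightarrow> int \<Rightarrow> (nat \<times> nat \<Rightarrow> 'a::field)" where
  "xhat m t = (\<lambda>g. \<Sum>i<m. ga_basis (xgen m [^]\<^bsub>Tgrp m t\<^esub> i) g)"

definition s3 :: "nat \<Rightarrow> int \<Rightarrow> (nat \<times> nat \<Rightarrow> 'a::field)" where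
  "s3 m t = (\<lambda>g. if g \<in> carrier (Tgrp m t) \<and> (\<exists>e. group.ord (Tgrp m t) g = 3 ^ e) then 1 else 0)"

end

theory Submission
  imports Defs
begin

definition Qf :: "nat \<Rightarrow> int \<Rightarrow> (nat \<times> nat \<Rightarrow> 'a::field) \<Rightarrow> nat \<times> nat \<Rightarrow> 'a" where
  "Qf m t A g = (\<Sum>h\<in>carrier (Tgrp m t). A h * (if h = g \<or> snd h \<noteq> snd g then 1 else 0))"

lemma carrier_T: "carrier (Tgrp m t) = {(i, j). i < m \<and> j < 3}"
  by (simp add: Tgrp_def)
lemma one_T: "\<one>\<^bsub>Tgrp m t\<^esub> = (0, 0)"
  by (simp add: Tgrp_def)
lemma mult_T: "(i, j) \<otimes>\<^bsub>Tgrp m t\<^esub> (k, l) = (nat ((int i + int k * t ^ (2 * j)) mod int m), (j + l) mod 3)"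
  by (simp add: Tgrp_def)

lemma tpow_mod3:
  assumes "[t ^ 3 = 1] (mod int m)"
  shows "[t ^ n = t ^ (n mod 3)] (mod int m)"
proof -
  have "t ^ n = t ^ (3 * (n div 3) + n mod 3)" by simp
  also have "\<dots> = (t ^ 3) ^ (n div 3) * t ^ (n mod 3)" by (simp only: power_add power_mult)
  finally have "t ^ n = (t ^ 3) ^ (n div 3) * t ^ (n mod 3)" .
  moreover have "[(t ^ 3) ^ (n div 3) * t ^ (n mod 3) = 1 ^ (n div 3) * t ^ (n mod 3)] (mod int m)"
    using assms by (intro cong_mult cong_pow) auto
  ultimately show ?thesis by simp
qed

context
  fixes m :: nat and t :: int
  assumes mpos: "m > 0" and t3: "[t ^ 3 = 1] (mod int m)"
begin

lemma tpow_cong: "[t ^ (2 * ((j + l) mod 3)) = t ^ (2 * j) * t ^ (2 * l)] (mod int m)"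
proof -
  have h1: "[t ^ (2 * ((j + l) mod 3)) = t ^ (2 * ((j + l) mod 3) mod 3)] (mod int m)"
    by (rule tpow_mod3[OF t3])
  have h2: "2 * ((j + l) mod 3) mod 3 = (2 * j + 2 * l) mod 3" by (metis mod_mult_right_eq distrib_left)
  have h3: "[t ^ (2 * j + 2 * l) = t ^ ((2 * j + 2 * l) mod 3)] (mod int m)"
    by (rule tpow_mod3[OF t3])
  have "[t ^ (2 * ((j + l) mod 3)) = t ^ (2 * j + 2 * l)] (mod int m)"
    using cong_trans[OF h1[unfolded h2] cong_sym[OF h3]] .
  then show ?thesis unfolding power_add .
qed

lemma group_T: "group (Tgrp m t)"
proof (rule groupI)
  fix x y assume "x \<in> carrier (Tgrp m t)" "y \<in> carrier (Tgrp m t)"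
  then show "x \<otimes>\<^bsub>Tgrp m t\<^esub> y \<in> carrier (Tgrp m t)"
    using mpos by (cases x; cases y) (auto simp: carrier_T mult_T nat_less_iff)
next
  show "\<one>\<^bsub>Tgrp m t\<^esub> \<in> carrier (Tgrp m t)" using mpos by (simp add: carrier_T one_T)
next
  fix x assume "x \<in> carrier (Tgrp m t)"
  then show "\<one>\<^bsub>Tgrp m t\<^esub> \<otimes>\<^bsub>Tgrp m t\<^esub> x = x"
    by (cases x) (auto simp: carrier_T mult_T one_T)
next
  fix x y z assume "x \<in> carrier (Tgrp m t)" "y \<in> carrier (Tgrp m t)" "z \<in> carrier (Tgrp m t)"
  then obtain i j k l p q where xyz: "x = (i, j)" "y = (k, l)" "z = (p, q)" "j < 3" "l < 3"
    by (auto simp: carrier_T)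
  define a where "a = t ^ (2 * j)"
  define c where "c = t ^ (2 * l)"
  define b where "b = t ^ (2 * ((j + l) mod 3))"
  have bac: "b mod int m = (a * c) mod int m"
    using tpow_cong[of j l] unfolding a_def b_def c_def cong_def .
  have nn: "0 \<le> u mod int m" for u using mpos by simp
  have "(int (nat ((int i + int k * a) mod int m)) + int p * b) mod int m
        = (int i + int k * a + int p * b) mod int m"
    using nn by (simp add: mod_add_left_eq)
  also have "\<dots> = (int i + int k * a + int p * (a * c)) mod int m"
    by (metis bac mod_add_right_eq mod_mult_right_eq)
  also have "\<dots> = (int i + (int k + int p * c) * a) mod int m"
    by (simp add: algebra_simps)
  also have "\<dots> = (int i + int (nat ((int k + int p * c) mod int m)) * a) mod int m"
    using nn by (metis mod_add_right_eq mod_mult_left_eq int_nat_eq)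
  finally have e: "(int (nat ((int i + int k * a) mod int m)) + int p * b) mod int m
     = (int i + int (nat ((int k + int p * c) mod int m)) * a) mod int m" .
  show "x \<otimes>\<^bsub>Tgrp m t\<^esub> y \<otimes>\<^bsub>Tgrp m t\<^esub> z = x \<otimes>\<^bsub>Tgrp m t\<^esub> (y \<otimes>\<^bsub>Tgrp m t\<^esub> z)"
    using e unfolding xyz a_def b_def c_def by (simp add: mult_T mod_add_left_eq mod_add_right_eq add.assoc)
next
  fix x assume "x \<in> carrier (Tgrp m t)"
  then obtain i j where x: "x = (i, j)" "i < m" "j < 3" by (auto simp: carrier_T)
  define l where "l = (3 - j) mod 3"
  define kk where "kk = (- int i * t ^ (2 * l)) mod int m"
  have kk: "0 \<le> kk" "kk < int m" using mpos by (auto simp: kk_def)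
  have "(nat kk, l) \<otimes>\<^bsub>Tgrp m t\<^esub> x = \<one>\<^bsub>Tgrp m t\<^esub>"
  proof -
    have "(kk + int i * t ^ (2 * l)) mod int m = 0"
      unfolding kk_def by (simp add: mod_add_left_eq)
    moreover have "(l + j) mod 3 = 0"
    proof -
      from x(3) have "j = 0 \<or> j = 1 \<or> j = 2" by auto
      then show ?thesis by (auto simp: l_def)
    qed
    ultimately show ?thesis using kk by (simp add: x mult_T one_T)
  qed
  moreover have "(nat kk, l) \<in> carrier (Tgrp m t)" using kk by (auto simp: carrier_T l_def)
  ultimately show "\<exists>y\<in>carrier (Tgrp m t). y \<otimes>\<^bsub>Tgrp m t\<^esub> x = \<one>\<^bsub>Tgrp m t\<^esub>" by blast
qed


lemma dvd3: "(d::nat) dvd 3 \<Longrightarrow> d = 1 \<or> d = 3"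
proof -
  assume d: "d dvd 3"
  then have "d \<le> 3" by (auto dest: dvd_imp_le)
  then have "d \<in> {0, 1, 2, 3}" by auto
  then show ?thesis using d by auto
qed

lemma C_eq: "carrier (Tgrp m t) = {..<m} \<times> {..<3}"
  by (auto simp: carrier_T)

lemma finC: "finite (carrier (Tgrp m t))"
  by (simp add: C_eq)

lemma snd_mult: "snd (a \<otimes>\<^bsub>Tgrp m t\<^esub> b) = (snd a + snd b) mod 3"
  by (cases a; cases b) (simp add: mult_T)

lemma pow_row0: "i < m \<Longrightarrow> (i, 0) [^]\<^bsub>Tgrp m t\<^esub> (n::nat) = ((n * i) mod m, 0)"
proof (induction n)
  case 0
  then show ?case by (simp add: one_T)
next
  case (Suc n)
  have "(int i + int (n * i mod m)) mod int m = int ((i + n * i) mod m)"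
    by (simp add: of_nat_mod mod_add_right_eq)
  then show ?case using Suc
    by (simp add: mult_T add.commute)
qed

lemma xgen_pow: "xgen m [^]\<^bsub>Tgrp m t\<^esub> (n::nat) = (n mod m, 0)"
proof -
  have "1 mod m < m" using mpos by simp
  then show ?thesis unfolding xgen_def by (simp add: pow_row0 mod_mult_right_eq)
qed

lemma xhat_eq: "xhat m t = (\<lambda>g. if fst g < m \<and> snd g = 0 then 1 else 0)"
proof
  fix g :: "nat \<times> nat"
  obtain a b where g: "g = (a, b)" by (cases g)
  have "xhat m t g = (\<Sum>i<m. if i = a then (if b = 0 then 1 else 0) else 0)"
    unfolding xhat_def xgen_pow ga_basis_def g
    by (intro sum.cong) auto
  also have "\<dots> = (if a < m \<and> b = 0 then 1 else 0)"
    by (simp add: sum.delta')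
  finally show "xhat m t g = (if fst g < m \<and> snd g = 0 then 1 else 0)" by (simp add: g)
qed

lemma sumC: "(\<Sum>g\<in>carrier (Tgrp m t). f g) = (\<Sum>i<m. f (i, 0) + f (i, 1) + f (i, 2))"
proof -
  have "(\<Sum>g\<in>carrier (Tgrp m t). f g) = (\<Sum>i<m. \<Sum>j<3. f (i, j))"
    unfolding C_eq by (simp add: sum.cartesian_product)
  also have "\<dots> = (\<Sum>i<m. f (i, 0) + f (i, 1) + f (i, 2))"
  proof (rule sum.cong)
    fix i
    have "{..<3::nat} = {0, 1, 2}" by auto
    then show "(\<Sum>j<3. f (i, j)) = f (i, 0) + f (i, 1) + f (i, 2)"
      by (simp add: ac_simps)
  qed simp
  finally show ?thesis .
qed

lemma mult_basis:
  assumes "h \<in> carrier (Tgrp m t)"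
  shows "ga_mult m t f (ga_basis h) g
    = (\<Sum>a\<in>carrier (Tgrp m t). if a \<otimes>\<^bsub>Tgrp m t\<^esub> h = g then f a else 0)"
  unfolding ga_mult_def
proof (rule sum.cong)
  fix a
  have "(\<Sum>k\<in>carrier (Tgrp m t). if a \<otimes>\<^bsub>Tgrp m t\<^esub> k = g then f a * ga_basis h k else 0)
     = (\<Sum>k\<in>carrier (Tgrp m t). if k = h then (if a \<otimes>\<^bsub>Tgrp m t\<^esub> h = g then f a else 0) else 0)"
    by (intro sum.cong) (auto simp: ga_basis_def)
  also have "\<dots> = (if a \<otimes>\<^bsub>Tgrp m t\<^esub> h = g then f a else 0)"
    using assms finC by (simp add: sum.delta')
  finally show "(\<Sum>k\<in>carrier (Tgrp m t). if a \<otimes>\<^bsub>Tgrp m t\<^esub> k = g then f a * ga_basis h k else 0)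
     = (if a \<otimes>\<^bsub>Tgrp m t\<^esub> h = g then f a else 0)" .
qed simp

lemma xhat_y:
  assumes "l < 3"
  shows "ga_mult m t (xhat m t) (ga_basis (0, l)) = (\<lambda>g. if fst g < m \<and> snd g = l then 1 else 0)"
proof
  fix g :: "nat \<times> nat"
  obtain a b where g: "g = (a, b)" by (cases g)
  have h: "(0, l) \<in> carrier (Tgrp m t)" using assms mpos by (simp add: carrier_T)
  have l3: "l = 0 \<or> l = 1 \<or> l = 2" using assms by auto
  have "ga_mult m t (xhat m t) (ga_basis (0, l)) g = (\<Sum>i<m. if i = a then (if b = l then 1 else 0) else 0)"
    unfolding mult_basis[OF h] sumC
    by (intro sum.cong) (use l3 in \<open>auto simp: xhat_eq mult_T g\<close>)
  also have "\<dots> = (if a < m \<and> b = l then 1 else 0)"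
    by (simp add: sum.delta')
  finally show "ga_mult m t (xhat m t) (ga_basis (0, l)) g = (if fst g < m \<and> snd g = l then 1 else 0)"
    by (simp add: g)
qed

lemma inv_y: "inv\<^bsub>Tgrp m t\<^esub> ygen = (0, 2)"
proof -
  interpret group "Tgrp m t" by (rule group_T)
  show ?thesis
    by (rule inv_equality) (use mpos in \<open>auto simp: ygen_def mult_T one_T carrier_T\<close>)
qed


lemma mult_right:
  assumes g: "g \<in> carrier (Tgrp m t)"
  shows "ga_mult m t A S g = (\<Sum>h\<in>carrier (Tgrp m t). A h * S (inv\<^bsub>Tgrp m t\<^esub> h \<otimes>\<^bsub>Tgrp m t\<^esub> g))"
  unfolding ga_mult_def
proof (rule sum.cong)
  interpret G: group "Tgrp m t" by (rule group_T)
  fix h assume h: "h \<in> carrier (Tgrp m t)"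
  have "(\<Sum>k\<in>carrier (Tgrp m t). if h \<otimes>\<^bsub>Tgrp m t\<^esub> k = g then A h * S k else 0)
      = (\<Sum>k\<in>carrier (Tgrp m t). if k = inv\<^bsub>Tgrp m t\<^esub> h \<otimes>\<^bsub>Tgrp m t\<^esub> g then A h * S k else 0)"
    by (intro sum.cong refl) (use h g G.inv_solve_left in auto)
  also have "\<dots> = A h * S (inv\<^bsub>Tgrp m t\<^esub> h \<otimes>\<^bsub>Tgrp m t\<^esub> g)"
    using h g finC by (simp add: sum.delta')
  finally show "(\<Sum>k\<in>carrier (Tgrp m t). if h \<otimes>\<^bsub>Tgrp m t\<^esub> k = g then A h * S k else 0)
      = A h * S (inv\<^bsub>Tgrp m t\<^esub> h \<otimes>\<^bsub>Tgrp m t\<^esub> g)" .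
qed simp

lemma mult_left:
  assumes g: "g \<in> carrier (Tgrp m t)"
  shows "ga_mult m t S A g = (\<Sum>k\<in>carrier (Tgrp m t). S (g \<otimes>\<^bsub>Tgrp m t\<^esub> inv\<^bsub>Tgrp m t\<^esub> k) * A k)"
  unfolding ga_mult_def
  apply (subst sum.swap)
proof (rule sum.cong)
  interpret G: group "Tgrp m t" by (rule group_T)
  fix k assume k: "k \<in> carrier (Tgrp m t)"
  have "(\<Sum>h\<in>carrier (Tgrp m t). if h \<otimes>\<^bsub>Tgrp m t\<^esub> k = g then S h * A k else 0)
      = (\<Sum>h\<in>carrier (Tgrp m t). if h = g \<otimes>\<^bsub>Tgrp m t\<^esub> inv\<^bsub>Tgrp m t\<^esub> k then S h * A k else 0)"
    by (intro sum.cong refl) (use k g G.inv_solve_right in auto)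
  also have "\<dots> = S (g \<otimes>\<^bsub>Tgrp m t\<^esub> inv\<^bsub>Tgrp m t\<^esub> k) * A k"
    using k g finC by (simp add: sum.delta')
  finally show "(\<Sum>h\<in>carrier (Tgrp m t). if h \<otimes>\<^bsub>Tgrp m t\<^esub> k = g then S h * A k else 0)
      = S (g \<otimes>\<^bsub>Tgrp m t\<^esub> inv\<^bsub>Tgrp m t\<^esub> k) * A k" .
qed simp

lemma mult_outside:
  assumes g: "g \<notin> carrier (Tgrp m t)"
  shows "ga_mult m t A B g = 0"
proof -
  interpret G: group "Tgrp m t" by (rule group_T)
  show ?thesis unfolding ga_mult_def
    by (intro sum.neutral ballI) (use g G.m_closed in auto)
qed

lemma snd_key:
  assumes h: "h \<in> carrier (Tgrp m t)" and g: "g \<in> carrier (Tgrp m t)"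
    and u: "u \<in> carrier (Tgrp m t)" and eq: "g = h \<otimes>\<^bsub>Tgrp m t\<^esub> u"
  shows "(u = (0, 0) \<or> snd u \<noteq> 0) \<longleftrightarrow> (h = g \<or> snd h \<noteq> snd g)"
proof -
  interpret G: group "Tgrp m t" by (rule group_T)
  have s: "snd g = (snd h + snd u) mod 3" using eq snd_mult by simp
  have lt: "snd h < 3" "snd u < 3" using h u by (auto simp: carrier_T)
  have "u = (0, 0) \<longleftrightarrow> h = g"
  proof
    assume "u = (0, 0)" then have "u = \<one>\<^bsub>Tgrp m t\<^esub>" by (simp add: one_T)
    then show "h = g" using eq h by simp
  next
    assume "h = g"
    then have "h = h \<otimes>\<^bsub>Tgrp m t\<^esub> u" using eq by simp
    then have "u = \<one>\<^bsub>Tgrp m t\<^esub>" using h u by simp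
    then show "u = (0, 0)" by (simp add: one_T)
  qed
  moreover have "snd u \<noteq> 0 \<longleftrightarrow> snd h \<noteq> snd g"
    using s lt by (auto simp: mod_if)
  moreover have "u = (0, 0) \<Longrightarrow> snd h = snd g" using s lt by auto
  ultimately show ?thesis by blast
qed


lemma dvd_cyc:
  assumes gcd1: "gcd (int m) (t - 1) = 1"
  shows "int m dvd 1 + t ^ 2 + t ^ 4"
proof -
  have "int m dvd t ^ 3 - 1" using t3 by (simp add: cong_iff_dvd_diff)
  moreover have "t ^ 3 - 1 = (t - 1) * (t ^ 2 + t + 1)" by (simp add: algebra_simps power2_eq_square power3_eq_cube)
  moreover have "coprime (int m) (t - 1)" using gcd1 by (simp add: coprime_iff_gcd_eq_1)
  ultimately have "int m dvd t ^ 2 + t + 1" using coprime_dvd_mult_right_iff by metis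
  moreover have "1 + t ^ 2 + t ^ 4 = (t ^ 2 + t + 1) * (t ^ 2 - t + 1)"
    by (simp add: algebra_simps power2_eq_square power4_eq_xxxx)
  ultimately show ?thesis by simp
qed

lemma ord_char:
  assumes gcd1: "gcd (int m) (t - 1) = 1" and n3: "\<not> 3 dvd m"
    and g: "g \<in> carrier (Tgrp m t)"
  shows "(\<exists>e. group.ord (Tgrp m t) g = 3 ^ e) \<longleftrightarrow> (g = (0, 0) \<or> snd g \<noteq> 0)"
proof -
  interpret G: group "Tgrp m t" by (rule group_T)
  obtain i j where gij: "g = (i, j)" and ij: "i < m" "j < 3" using g by (auto simp: carrier_T)
  show ?thesis
  proof (cases "g = (0, 0)")
    case True
    then have "g = \<one>\<^bsub>Tgrp m t\<^esub>" by (simp add: one_T)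
    then have "G.ord g dvd 1" using G.pow_eq_id[of g 1] g by simp
    then have "G.ord g = 3 ^ 0" by simp
    then show ?thesis using True by blast
  next
    case False
    show ?thesis
    proof (cases "j = 0")
      case True
      with False gij have i0: "i \<noteq> 0" by auto
      have "\<not> (\<exists>e. G.ord g = 3 ^ e)"
      proof
        assume "\<exists>e. G.ord g = 3 ^ e"
        then obtain e where e: "G.ord g = 3 ^ e" by blast
        have "g [^]\<^bsub>Tgrp m t\<^esub> G.ord g = \<one>\<^bsub>Tgrp m t\<^esub>" using g by simp
        then have "(3 ^ e * i) mod m = 0" using e ij unfolding gij True by (simp add: pow_row0 one_T)
        then have "m dvd 3 ^ e * i" by (simp add: dvd_eq_mod_eq_0)
        moreover have "coprime m (3 ^ e)"
        proof -
          have gd: "gcd m 3 dvd 3" by simp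
          moreover have "gcd m 3 \<noteq> 3" using n3 by (metis gcd_dvd1)
          ultimately have "gcd m 3 = 1" using dvd3 by blast
          then have "coprime m 3" by (simp add: coprime_iff_gcd_eq_1)
          then show ?thesis by simp
        qed
        ultimately have "m dvd i" using coprime_dvd_mult_right_iff by metis
        then show False using i0 ij by (auto dest: dvd_imp_le)
      qed
      then show ?thesis using False True gij by simp
    next
      case False
      have cyc: "(int i + int i * t ^ 2 + int i * t ^ 4) mod int m = 0"
      proof -
        have "int i + int i * t ^ 2 + int i * t ^ 4 = int i * (1 + t ^ 2 + t ^ 4)" by (simp add: algebra_simps)
        then show ?thesis using dvd_cyc[OF gcd1] by (simp add: dvd_eq_mod_eq_0[symmetric])
      qed
      have "g [^]\<^bsub>Tgrp m t\<^esub> (3::nat) = (g \<otimes>\<^bsub>Tgrp m t\<^esub> g) \<otimes>\<^bsub>Tgrp m t\<^esub> g"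
        using g by (simp add: numeral_3_eq_3)
      also have "\<dots> = (0, 0)"
      proof -
        have j12: "j = 1 \<or> j = 2" using False ij by auto
        have nn: "0 \<le> u mod int m" for u using mpos by simp
        have p4: "(t ^ 2) ^ 2 = t ^ 4" "t ^ 2 * t ^ 2 = t ^ 4" by (simp_all add: power_mult[symmetric] power_add[symmetric])
        from j12 show ?thesis
        proof
          assume j1: "j = 1"
          have "(int (nat ((int i + int i * t ^ 2) mod int m)) + int i * t ^ 4) mod int m = 0"
            using cyc nn by (simp add: mod_add_left_eq)
          then show ?thesis by (simp add: gij j1 mult_T p4)
        next
          assume j2: "j = 2"
          have "(int (nat ((int i + int i * t ^ 4) mod int m)) + int i * t ^ 2) mod int m = 0"
          proof -
            have "(int (nat ((int i + int i * t ^ 4) mod int m)) + int i * t ^ 2) mod int m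
               = (int i + int i * t ^ 4 + int i * t ^ 2) mod int m"
              using nn by (simp add: mod_add_left_eq)
            also have "\<dots> = (int i + int i * t ^ 2 + int i * t ^ 4) mod int m" by (simp add: ac_simps)
            finally show ?thesis using cyc by simp
          qed
          then show ?thesis by (simp add: gij j2 mult_T p4)
        qed
      qed
      finally have "g [^]\<^bsub>Tgrp m t\<^esub> (3::nat) = \<one>\<^bsub>Tgrp m t\<^esub>" by (simp add: one_T)
      then have "G.ord g dvd 3" using G.pow_eq_id g by blast
      then have "G.ord g \<le> 3" by (auto dest: dvd_imp_le)
      then have "G.ord g \<in> {0, 1, 2, 3}" by auto
      with \<open>G.ord g dvd 3\<close> have "G.ord g = 3 ^ 0 \<or> G.ord g = 3 ^ 1" by auto
      then have "\<exists>e. G.ord g = 3 ^ e" by blast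
      then show ?thesis using False gij by simp
    qed
  qed
qed

lemma s3_eq:
  assumes "gcd (int m) (t - 1) = 1" and "\<not> 3 dvd m"
  shows "s3 m t = (\<lambda>g. if g \<in> carrier (Tgrp m t) \<and> (g = (0, 0) \<or> snd g \<noteq> 0) then 1 else 0)"
proof
  fix g :: "nat \<times> nat"
  show "s3 m t g = (if g \<in> carrier (Tgrp m t) \<and> (g = (0, 0) \<or> snd g \<noteq> 0) then 1 else 0)"
    unfolding s3_def by (cases "g \<in> carrier (Tgrp m t)") (simp_all add: ord_char[OF assms])
qed


lemma snd_key2:
  assumes k: "k \<in> carrier (Tgrp m t)" and g: "g \<in> carrier (Tgrp m t)"
    and u: "u \<in> carrier (Tgrp m t)" and eq: "g = u \<otimes>\<^bsub>Tgrp m t\<^esub> k"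
  shows "(u = (0, 0) \<or> snd u \<noteq> 0) \<longleftrightarrow> (k = g \<or> snd k \<noteq> snd g)"
proof -
  interpret G: group "Tgrp m t" by (rule group_T)
  have s: "snd g = (snd u + snd k) mod 3" using eq snd_mult by simp
  have lt: "snd k < 3" "snd u < 3" using k u by (auto simp: carrier_T)
  have "u = (0, 0) \<longleftrightarrow> k = g"
  proof
    assume "u = (0, 0)" then have "u = \<one>\<^bsub>Tgrp m t\<^esub>" by (simp add: one_T)
    then show "k = g" using eq k by simp
  next
    assume "k = g"
    then have "k = u \<otimes>\<^bsub>Tgrp m t\<^esub> k" using eq by simp
    then have "u = \<one>\<^bsub>Tgrp m t\<^esub>" using k u by simp
    then show "u = (0, 0)" by (simp add: one_T)
  qed
  moreover have "snd u \<noteq> 0 \<longleftrightarrow> snd k \<noteq> snd g"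
    using s lt by (auto simp: mod_if)
  ultimately show ?thesis by blast
qed

lemma prod_right_Q:
  assumes "gcd (int m) (t - 1) = 1" and "\<not> 3 dvd m" and g: "g \<in> carrier (Tgrp m t)"
  shows "ga_mult m t A (s3 m t) g = Qf m t A g"
proof -
  interpret G: group "Tgrp m t" by (rule group_T)
  show ?thesis unfolding mult_right[OF g] Qf_def
  proof (rule sum.cong)
    fix h assume h: "h \<in> carrier (Tgrp m t)"
    define u where "u = inv\<^bsub>Tgrp m t\<^esub> h \<otimes>\<^bsub>Tgrp m t\<^esub> g"
    have u: "u \<in> carrier (Tgrp m t)" using h g by (simp add: u_def)
    have eq: "g = h \<otimes>\<^bsub>Tgrp m t\<^esub> u" using G.inv_solve_left[OF u h g] by (simp add: u_def)
    show "A h * s3 m t (inv\<^bsub>Tgrp m t\<^esub> h \<otimes>\<^bsub>Tgrp m t\<^esub> g) = A h * (if h = g \<or> snd h \<noteq> snd g then 1 else 0)"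
      unfolding u_def[symmetric] s3_eq[OF assms(1,2)] using snd_key[OF h g u eq] u by simp
  qed simp
qed

lemma prod_left_Q:
  assumes "gcd (int m) (t - 1) = 1" and "\<not> 3 dvd m" and g: "g \<in> carrier (Tgrp m t)"
  shows "ga_mult m t (s3 m t) A g = Qf m t A g"
proof -
  interpret G: group "Tgrp m t" by (rule group_T)
  show ?thesis unfolding mult_left[OF g] Qf_def
  proof (rule sum.cong)
    fix k assume k: "k \<in> carrier (Tgrp m t)"
    define u where "u = g \<otimes>\<^bsub>Tgrp m t\<^esub> inv\<^bsub>Tgrp m t\<^esub> k"
    have u: "u \<in> carrier (Tgrp m t)" using k g by (simp add: u_def)
    have eq: "g = u \<otimes>\<^bsub>Tgrp m t\<^esub> k" using G.inv_solve_right[OF u g k] by (simp add: u_def)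
    show "s3 m t (g \<otimes>\<^bsub>Tgrp m t\<^esub> inv\<^bsub>Tgrp m t\<^esub> k) * A k = A k * (if k = g \<or> snd k \<noteq> snd g then 1 else 0)"
      unfolding u_def[symmetric] s3_eq[OF assms(1,2)] using snd_key2[OF k g u eq] u by simp
  qed simp
qed

lemma Q_explicit:
  assumes i: "i < m"
  shows "Qf m t A (i, 0) = A (i, 0) + (\<Sum>i'<m. A (i', 1)) + (\<Sum>i'<m. A (i', 2))"
    and "Qf m t A (i, 1) = A (i, 1) + (\<Sum>i'<m. A (i', 0)) + (\<Sum>i'<m. A (i', 2))"
    and "Qf m t A (i, 2) = A (i, 2) + (\<Sum>i'<m. A (i', 0)) + (\<Sum>i'<m. A (i', 1))"
proof -
  have "Qf m t A (i, 0) = (\<Sum>i'<m. (if i' = i then A (i, 0) else 0) + A (i', 1) + A (i', 2))"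
    unfolding Qf_def sumC by (intro sum.cong) auto
  then show "Qf m t A (i, 0) = A (i, 0) + (\<Sum>i'<m. A (i', 1)) + (\<Sum>i'<m. A (i', 2))"
    using i by (simp add: sum.distrib sum.delta')
  have "Qf m t A (i, 1) = (\<Sum>i'<m. A (i', 0) + (if i' = i then A (i, 1) else 0) + A (i', 2))"
    unfolding Qf_def sumC by (intro sum.cong) auto
  then show "Qf m t A (i, 1) = A (i, 1) + (\<Sum>i'<m. A (i', 0)) + (\<Sum>i'<m. A (i', 2))"
    using i by (simp add: sum.distrib sum.delta')
  have "Qf m t A (i, 2) = (\<Sum>i'<m. A (i', 0) + A (i', 1) + (if i' = i then A (i, 2) else 0))"
    unfolding Qf_def sumC by (intro sum.cong) auto
  then show "Qf m t A (i, 2) = A (i, 2) + (\<Sum>i'<m. A (i', 0)) + (\<Sum>i'<m. A (i', 1))"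
    using i by (simp add: sum.distrib sum.delta')
qed

end

theorem proposition3p2:
  fixes k m :: nat and t :: int
  assumes "finite (UNIV :: 'a::field set)" and "CHAR('a) = 3"
    and "m = 3 * k + 1"
    and "[t ^ 3 = 1] (mod int m)"
    and "gcd (int m) (t - 1) = 1"
  shows "{\<alpha> :: nat \<times> nat \<Rightarrow> 'a. in_FG m t \<alpha> \<and>
            ga_mult m t \<alpha> (s3 m t) = (\<lambda>_. 0) \<and> ga_mult m t (s3 m t) \<alpha> = (\<lambda>_. 0)}
       = {ga_add (ga_add
            (ga_smult am (ga_mult m t (xhat m t) (ga_basis (inv\<^bsub>Tgrp m t\<^esub> ygen))))
            (ga_smult a (xhat m t)))
            (ga_smult ap (ga_mult m t (xhat m t) (ga_basis ygen)))
          | am a ap. am + a + ap = 0}"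
proof -
  have m0: "m > 0" using assms(3) by simp
  have n3: "\<not> 3 dvd m"
  proof -
    have "m mod 3 = 1" using assms(3) by simp
    then show ?thesis by (simp add: dvd_eq_mod_eq_0)
  qed
  have c3: "(of_nat 3 :: 'a) = 0" using of_nat_CHAR[where 'a='a] assms(2) by simp
  have ofm: "(of_nat m :: 'a) = 1" using c3 assms(3) by simp
  have Rc: "(\<Sum>i<m. f i) = (c :: 'a)" if "\<And>i. i < m \<Longrightarrow> f i = c" for f c
  proof -
    have "(\<Sum>i<m. f i) = (\<Sum>i<m. c)" using that by (intro sum.cong) auto
    also have "\<dots> = c" using ofm by simp
    finally show ?thesis .
  qed
  note t3 = assms(4) and gcd1 = assms(5)
  define E :: "'a \<Rightarrow> 'a \<Rightarrow> 'a \<Rightarrow> nat \<times> nat \<Rightarrow> 'a" where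
    "E am a ap = (\<lambda>g. if fst g < m \<and> snd g = 0 then a else if fst g < m \<and> snd g = 1 then ap
        else if fst g < m \<and> snd g = 2 then am else 0)" for am a ap
  have Eeq: "ga_add (ga_add
            (ga_smult am (ga_mult m t (xhat m t) (ga_basis (inv\<^bsub>Tgrp m t\<^esub> ygen))))
            (ga_smult a (xhat m t)))
            (ga_smult ap (ga_mult m t (xhat m t) (ga_basis ygen))) = E am a ap" for am a ap
  proof -
    have X1: "ga_mult m t (xhat m t) (ga_basis (0, 1)) = (\<lambda>g. if fst g < m \<and> snd g = 1 then 1 else (0::'a))"
      by (rule xhat_y[OF m0 t3]) simp
    have X2: "ga_mult m t (xhat m t) (ga_basis (0, 2)) = (\<lambda>g. if fst g < m \<and> snd g = 2 then 1 else (0::'a))"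
      by (rule xhat_y[OF m0 t3]) simp
    show ?thesis
      unfolding inv_y[OF m0 t3] unfolding ygen_def X1 X2 unfolding xhat_eq[OF m0 t3] ga_add_def ga_smult_def E_def
      by (intro ext) auto
  qed
  have Cm: "g \<in> carrier (Tgrp m t) \<longleftrightarrow> fst g < m \<and> snd g < 3" for g
    by (cases g) (simp add: carrier_T)
  show ?thesis
  proof (intro Set.set_eqI iffI)
    fix \<alpha> :: "nat \<times> nat \<Rightarrow> 'a"
    assume "\<alpha> \<in> {\<alpha>. in_FG m t \<alpha> \<and> ga_mult m t \<alpha> (s3 m t) = (\<lambda>_. 0) \<and> ga_mult m t (s3 m t) \<alpha> = (\<lambda>_. 0)}"
    then have fg: "in_FG m t \<alpha>" and pr: "ga_mult m t \<alpha> (s3 m t) = (\<lambda>_. 0)" by auto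
    have Q0: "Qf m t \<alpha> g = 0" if "g \<in> carrier (Tgrp m t)" for g
      using prod_right_Q[OF m0 t3 gcd1 n3 that, of \<alpha>] pr by (metis)
    define R where "R j = (\<Sum>i'<m. \<alpha> (i', j))" for j
    have e0: "\<alpha> (i, 0) = - (R 1 + R 2)" if "i < m" for i
      using Q0[of "(i, 0)"] Q_explicit(1)[OF m0 t3 that, of \<alpha>] that
      by (intro eq_neg_iff_add_eq_0[THEN iffD2]) (simp add: carrier_T R_def add.assoc)
    have e1: "\<alpha> (i, 1) = - (R 0 + R 2)" if "i < m" for i
      using Q0[of "(i, 1)"] Q_explicit(2)[OF m0 t3 that, of \<alpha>] that
      by (intro eq_neg_iff_add_eq_0[THEN iffD2]) (simp add: carrier_T R_def add.assoc)
    have e2: "\<alpha> (i, 2) = - (R 0 + R 1)" if "i < m" for i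
      using Q0[of "(i, 2)"] Q_explicit(3)[OF m0 t3 that, of \<alpha>] that
      by (intro eq_neg_iff_add_eq_0[THEN iffD2]) (simp add: carrier_T R_def add.assoc)
    have R0: "R 0 = \<alpha> (0, 0)" unfolding R_def by (rule Rc) (use e0 m0 in auto)
    have R1: "R 1 = \<alpha> (0, 1)" unfolding R_def by (rule Rc) (use e1 m0 in auto)
    have R2: "R 2 = \<alpha> (0, 2)" unfolding R_def by (rule Rc) (use e2 m0 in auto)
    have sum0: "\<alpha> (0, 2) + \<alpha> (0, 0) + \<alpha> (0, 1) = 0"
      using e0[OF m0] R1 R2 by (simp add: eq_neg_iff_add_eq_0 ac_simps)
    have "\<alpha> = E (\<alpha> (0, 2)) (\<alpha> (0, 0)) (\<alpha> (0, 1))"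
    proof
      fix g :: "nat \<times> nat"
      obtain i j where g: "g = (i, j)" by (cases g)
      show "\<alpha> g = E (\<alpha> (0, 2)) (\<alpha> (0, 0)) (\<alpha> (0, 1)) g"
      proof (cases "i < m \<and> j < 3")
        case True
        then have "j = 0 \<or> j = 1 \<or> j = 2" by auto
        then show ?thesis using True e0 e1 e2 m0 by (auto simp: g E_def)
      next
        case False
        then have "\<alpha> g = 0" using fg by (auto simp: in_FG_def carrier_T g)
        then show ?thesis using False by (auto simp: g E_def)
      qed
    qed
    then show "\<alpha> \<in> {ga_add (ga_add
            (ga_smult am (ga_mult m t (xhat m t) (ga_basis (inv\<^bsub>Tgrp m t\<^esub> ygen))))
            (ga_smult a (xhat m t)))
            (ga_smult ap (ga_mult m t (xhat m t) (ga_basis ygen)))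
          | am a ap. am + a + ap = 0}"
      unfolding Eeq using sum0 by blast
  next
    fix \<alpha> :: "nat \<times> nat \<Rightarrow> 'a"
    assume "\<alpha> \<in> {ga_add (ga_add
            (ga_smult am (ga_mult m t (xhat m t) (ga_basis (inv\<^bsub>Tgrp m t\<^esub> ygen))))
            (ga_smult a (xhat m t)))
            (ga_smult ap (ga_mult m t (xhat m t) (ga_basis ygen)))
          | am a ap. am + a + ap = 0}"
    then obtain am a ap where al: "\<alpha> = E am a ap" and s0: "am + a + ap = 0"
      unfolding Eeq by blast
    have fg: "in_FG m t \<alpha>" unfolding in_FG_def al E_def using Cm by auto
    have R0: "(\<Sum>i'<m. \<alpha> (i', 0)) = a" by (rule Rc) (simp add: al E_def)
    have R1: "(\<Sum>i'<m. \<alpha> (i', 1)) = ap" by (rule Rc) (simp add: al E_def)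
    have R2: "(\<Sum>i'<m. \<alpha> (i', 2)) = am" by (rule Rc) (simp add: al E_def)
    have Q0: "Qf m t \<alpha> g = 0" if g: "g \<in> carrier (Tgrp m t)" for g
    proof -
      obtain i j where gij: "g = (i, j)" and ij: "i < m" "j < 3" using g by (auto simp: carrier_T)
      then have "j = 0 \<or> j = 1 \<or> j = 2" by auto
      then show ?thesis
      proof (elim disjE)
        assume "j = 0" then show ?thesis
          using Q_explicit(1)[OF m0 t3 ij(1), of \<alpha>] R1 R2 s0 ij by (simp add: gij al E_def ofm ac_simps)
      next
        assume "j = 1" then show ?thesis
          using Q_explicit(2)[OF m0 t3 ij(1), of \<alpha>] R0 R2 s0 ij by (simp add: gij al E_def ofm ac_simps)
      next
        assume "j = 2" then show ?thesis
          using Q_explicit(3)[OF m0 t3 ij(1), of \<alpha>] R0 R1 s0 ij by (simp add: gij al E_def ofm ac_simps)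
      qed
    qed
    have P1: "ga_mult m t \<alpha> (s3 m t) = (\<lambda>_. 0)"
    proof
      fix g show "ga_mult m t \<alpha> (s3 m t) g = 0"
        by (cases "g \<in> carrier (Tgrp m t)")
          (simp_all add: prod_right_Q[OF m0 t3 gcd1 n3] Q0 mult_outside[OF m0 t3])
    qed
    have P2: "ga_mult m t (s3 m t) \<alpha> = (\<lambda>_. 0)"
    proof
      fix g show "ga_mult m t (s3 m t) \<alpha> g = 0"
        by (cases "g \<in> carrier (Tgrp m t)")
          (simp_all add: prod_left_Q[OF m0 t3 gcd1 n3] Q0 mult_outside[OF m0 t3])
    qed
    show "\<alpha> \<in> {\<alpha>. in_FG m t \<alpha> \<and> ga_mult m t \<alpha> (s3 m t) = (\<lambda>_. 0) \<and> ga_mult m t (s3 m t) \<alpha> = (\<lambda>_. 0)}"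
      using fg P1 P2 by simp
  qed
qed

end
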